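(* Every real-valued function $f$ on streams that is subadditive, non-negative, bounded and monotone is $2$-almost-smooth.
   Context: For disjoint consecutive segments $A,B$ of a stream, $AB$ denotes their concatenation; $n$ is a size measure of the stream. $f$ is subadditive if $f(AB)\le f(A)+f(B)$ for all disjoint segments $A,B$; non-negative if $f(A)\ge0$; bounded if $f(A)\le\mathrm{poly}(n)$ for every stream $A$; monotone if $f(AB)\ge f(B)$ and $f(AB)\ge f(A)$ for all disjoint segments $A,B$. A function is $d$-almost-smooth if it is $(1,d)$-almost-smooth, where $f$ is $(c,d)$-almost-smooth ($c,d\ge1$) if: (1) $f(A)\ge0$ for all $A$; (2) $f(B)\le c\,f(AB)$ for all disjoint segments $A,B$; (3) $f(A)\le\mathrm{poly}(n)$; (4) for all disjoint consecutive segments $A,B,C$ with $f(AB)\neq0$ and $f(ABC)\ne0$, $\frac{f(B)}{f(AB)}\le d\cdot\frac{f(BC)}{f(ABC)}$. *)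

theory Defs
  imports Complex_Main
begin

text \<open>Streams are modelled as lists over an item type; a segment is itself a list,
and the concatenation AB of consecutive disjoint segments is A @ B.
The size measure n of a stream is its length.\<close>

definition subadditive :: "('a list \<Rightarrow> real) \<Rightarrow> bool" where
  "subadditive f \<longleftrightarrow> (\<forall>A B. f (A @ B) \<le> f A + f B)"

definition nonneg :: "('a list \<Rightarrow> real) \<Rightarrow> bool" where
  "nonneg f \<longleftrightarrow> (\<forall>A. f A \<ge> 0)"

definition poly_bounded :: "('a list \<Rightarrow> real) \<Rightarrow> bool" where
  "poly_bounded f \<longleftrightarrow> (\<exists>c::real. \<exists>k::nat. \<forall>A. f A \<le> c * (real (length A) + 1) ^ k)"

definition stream_monotone :: "('a list \<Rightarrow> real) \<Rightarrow> bool" where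
  "stream_monotone f \<longleftrightarrow> (\<forall>A B. f (A @ B) \<ge> f B \<and> f (A @ B) \<ge> f A)"

definition almost_smooth :: "real \<Rightarrow> real \<Rightarrow> ('a list \<Rightarrow> real) \<Rightarrow> bool" where
  "almost_smooth c d f \<longleftrightarrow> c \<ge> 1 \<and> d \<ge> 1 \<and>
     (\<forall>A. f A \<ge> 0) \<and>
     (\<forall>A B. f B \<le> c * f (A @ B)) \<and>
     poly_bounded f \<and>
     (\<forall>A B C. f (A @ B) \<noteq> 0 \<and> f (A @ B @ C) \<noteq> 0 \<longrightarrow>
        f B / f (A @ B) \<le> d * (f (B @ C) / f (A @ B @ C)))"

definition d_almost_smooth :: "real \<Rightarrow> ('a list \<Rightarrow> real) \<Rightarrow> bool" where
  "d_almost_smooth d f \<longleftrightarrow> almost_smooth 1 d f"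

end

theory Submission
  imports Defs
begin

lemma key:
  fixes x y z b c :: real
  assumes "x > 0" "z > 0" "b \<ge> 0" "b \<le> x" "b \<le> y" "z \<le> x + y"
  shows "b / x \<le> 2 * (y / z)"
proof -
  have "b * z \<le> 2 * y * x"
  proof (cases "x \<ge> y")
    case True
    have "b * z \<le> y * z" using assms by (simp add: mult_right_mono)
    also have "\<dots> \<le> y * (2*x)" using assms True
      by (intro mult_left_mono) auto
    finally show ?thesis by (simp add: algebra_simps)
  next
    case False
    have "b * z \<le> x * z" using assms by (simp add: mult_right_mono)
    also have "\<dots> \<le> x * (2*y)" using assms False
      by (intro mult_left_mono) auto
    finally show ?thesis by (simp add: algebra_simps)
  qed
  then show ?thesis using assms by (simp add: field_simps)
qed

theorem lemma2p4:
  fixes f :: "'a list \<Rightarrow> real"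
  assumes "subadditive f" and "nonneg f" and "poly_bounded f" and "stream_monotone f"
  shows "d_almost_smooth 2 f"
  unfolding d_almost_smooth_def almost_smooth_def
proof (intro conjI allI impI)
  fix A B C :: "'a list"
  assume h: "f (A @ B) \<noteq> 0 \<and> f (A @ B @ C) \<noteq> 0"
  have n: "\<And>X. f X \<ge> 0" using assms(2) unfolding nonneg_def by auto
  have m: "\<And>X Y. f (X @ Y) \<ge> f Y \<and> f (X @ Y) \<ge> f X"
    using assms(4) unfolding stream_monotone_def by auto
  have s: "f ((A @ B) @ C) \<le> f (A @ B) + f C"
    using assms(1) unfolding subadditive_def by blast
  have "f C \<le> f (B @ C)" using m by blast
  hence z: "f (A @ B @ C) \<le> f (A @ B) + f (B @ C)" using s by simp
  show "f B / f (A @ B) \<le> 2 * (f (B @ C) / f (A @ B @ C))"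
    apply (rule key)
    using h n[of "A@B"] n[of "A@B@C"] n[of B] m[where X=A and Y=B] m[where X=B and Y=C] z by auto
next
  fix A B :: "'a list"
  show "f B \<le> 1 * f (A @ B)" using assms(4) unfolding stream_monotone_def by auto
qed (use assms in \<open>auto simp: nonneg_def\<close>)

end
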